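(* Let $K$ be a finite connected bipartite simple graph. Then the number of isomorphism classes of simple graphs $G$ with $KC(G)\cong K$ equals $|\Pi_K/{\cong}|$, the number of conjugacy classes of polarities of $K$ under $\operatorname{Aut}K$. In particular, $K$ is the Kronecker cover of exactly $k$ pairwise non-isomorphic simple graphs if and only if $k=|\Pi_K/{\cong}|$.
   Context: For a simple graph $G$, the Kronecker cover $KC(G)$ is the graph with vertex set $V(G)\times\{0,1\}$ in which $(u,a)$ is adjacent to $(v,b)$ if and only if $uv\in E(G)$ and $a\neq b$. Equivalently, it is the tensor product $G\times K_2$. Let $K$ be a connected bipartite graph with bipartition $(V_1,V_2)$. A polarity of $K$ is an automorphism $\pi\in\operatorname{Aut}K$ such that: - $\pi$ is a fixed-point-free involution; - $\pi(V_1)=V_2$; - for every vertex $v$, the vertices $v$ and $\pi(v)$ are non-adjacent. Let $\Pi_K\subseteq\operatorname{Aut}K$ be the set of all polarities of $K$. Define two polarities $\pi,\pi'$ to be equivalent, written $\pi\cong\pi'$, if $\pi'=\alpha\pi\alpha^{-1}$ for some $\alpha\in\operatorname{Aut}K$; this is an equivalence relation on $\Pi_K$. Then $\Pi_K/{\cong}$ denotes the set of equivalence classes. *)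

theory Defs
  imports Main
begin

definition simple_graph :: "'a set \<Rightarrow> 'a set set \<Rightarrow> bool" where
  "simple_graph V E \<longleftrightarrow> finite V \<and>
     (\<forall>e\<in>E. \<exists>u v. e = {u, v} \<and> u \<noteq> v \<and> u \<in> V \<and> v \<in> V)"

definition graph_iso :: "'a set \<times> 'a set set \<Rightarrow> 'b set \<times> 'b set set \<Rightarrow> bool" where
  "graph_iso G H \<longleftrightarrow> (\<exists>f. bij_betw f (fst G) (fst H) \<and>
     (\<forall>u\<in>fst G. \<forall>v\<in>fst G. {u, v} \<in> snd G \<longleftrightarrow> {f u, f v} \<in> snd H))"

definition kronecker_cover :: "'a set \<Rightarrow> 'a set set \<Rightarrow> ('a \<times> bool) set \<times> ('a \<times> bool) set set" where
  "kronecker_cover V E =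
     (V \<times> UNIV, {{(u, a), (v, b)} | u v a b. {u, v} \<in> E \<and> a \<noteq> b})"

definition connected_graph :: "'a set \<Rightarrow> 'a set set \<Rightarrow> bool" where
  "connected_graph V E \<longleftrightarrow> V \<noteq> {} \<and>
     (\<forall>u\<in>V. \<forall>v\<in>V. (\<lambda>x y. {x, y} \<in> E)\<^sup>*\<^sup>* u v)"

definition bipartition :: "'a set \<Rightarrow> 'a set set \<Rightarrow> 'a set \<Rightarrow> 'a set \<Rightarrow> bool" where
  "bipartition V E V1 V2 \<longleftrightarrow> V1 \<union> V2 = V \<and> V1 \<inter> V2 = {} \<and>
     (\<forall>u v. {u, v} \<in> E \<longrightarrow> (u \<in> V1 \<and> v \<in> V2) \<or> (u \<in> V2 \<and> v \<in> V1))"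

text \<open>Automorphisms of (V,E), represented as permutations of V extended by the
  identity outside V (so that composition and inverse are the usual ones).\<close>

definition graph_aut :: "'a set \<Rightarrow> 'a set set \<Rightarrow> ('a \<Rightarrow> 'a) set" where
  "graph_aut V E = {\<alpha>. bij_betw \<alpha> V V \<and> (\<forall>x. x \<notin> V \<longrightarrow> \<alpha> x = x) \<and>
     (\<forall>u\<in>V. \<forall>v\<in>V. {u, v} \<in> E \<longleftrightarrow> {\<alpha> u, \<alpha> v} \<in> E)}"

definition polarities :: "'a set \<Rightarrow> 'a set set \<Rightarrow> 'a set \<Rightarrow> 'a set \<Rightarrow> ('a \<Rightarrow> 'a) set" where
  "polarities V E V1 V2 = {\<pi> \<in> graph_aut V E.
     (\<forall>v\<in>V. \<pi> (\<pi> v) = v \<and> \<pi> v \<noteq> v) \<and> \<pi> ` V1 = V2 \<and>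
     (\<forall>v\<in>V. {v, \<pi> v} \<notin> E)}"

definition polarity_conj :: "'a set \<Rightarrow> 'a set set \<Rightarrow> 'a set \<Rightarrow> 'a set \<Rightarrow> (('a \<Rightarrow> 'a) \<times> ('a \<Rightarrow> 'a)) set" where
  "polarity_conj V E V1 V2 = {(\<pi>, \<pi>'). \<pi> \<in> polarities V E V1 V2 \<and> \<pi>' \<in> polarities V E V1 V2 \<and>
     (\<exists>\<alpha>\<in>graph_aut V E. \<pi>' = \<alpha> \<circ> \<pi> \<circ> inv \<alpha>)}"

text \<open>Simple graphs (represented on vertex type nat, which suffices up to
  isomorphism) whose Kronecker cover is isomorphic to (V,E), and the
  isomorphism relation on them.\<close>

definition kc_preimages :: "'a set \<Rightarrow> 'a set set \<Rightarrow> (nat set \<times> nat set set) set" where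
  "kc_preimages V E = {G. simple_graph (fst G) (snd G) \<and>
     graph_iso (kronecker_cover (fst G) (snd G)) (V, E)}"

definition iso_rel :: "(nat set \<times> nat set set) set \<Rightarrow> ((nat set \<times> nat set set) \<times> (nat set \<times> nat set set)) set" where
  "iso_rel S = {(G, H). G \<in> S \<and> H \<in> S \<and> graph_iso G H}"

end

theory Submission
  imports Defs "HOL-Library.FuncSet"
begin

definition sw :: "'b \<times> bool \<Rightarrow> 'b \<times> bool" where
  "sw x = (fst x, \<not> snd x)"

definition kiso :: "'b set \<Rightarrow> 'b set set \<Rightarrow> ('b \<times> bool \<Rightarrow> 'a) \<Rightarrow> 'a set \<Rightarrow> 'a set set \<Rightarrow> bool" where
  "kiso VG EG \<phi> V E \<longleftrightarrow> bij_betw \<phi> (VG \<times> UNIV) V \<and>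
    (\<forall>x\<in>VG \<times> UNIV. \<forall>y\<in>VG \<times> UNIV. {x, y} \<in> snd (kronecker_cover VG EG) \<longleftrightarrow> {\<phi> x, \<phi> y} \<in> E)"

definition pol :: "'b set \<Rightarrow> ('b \<times> bool \<Rightarrow> 'a) \<Rightarrow> 'a set \<Rightarrow> 'a \<Rightarrow> 'a" where
  "pol VG \<phi> V x = (if x \<in> V then \<phi> (sw (inv_into (VG \<times> UNIV) \<phi> x)) else x)"

lemma kc_edge: "{(u, a), (v, b)} \<in> snd (kronecker_cover VG EG) \<longleftrightarrow> {u, v} \<in> EG \<and> a \<noteq> b"
  unfolding kronecker_cover_def
  by (auto simp: doubleton_eq_iff insert_commute)

lemma kc_edge': "{x, y} \<in> snd (kronecker_cover VG EG) \<longleftrightarrow> {fst x, fst y} \<in> EG \<and> snd x \<noteq> snd y"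
  using kc_edge[of "fst x" "snd x" "fst y" "snd y"] by simp

lemma graph_iso_kc: "graph_iso (kronecker_cover VG EG) (V, E) \<longleftrightarrow> (\<exists>\<phi>. kiso VG EG \<phi> V E)"
  unfolding graph_iso_def kiso_def by (simp add: kronecker_cover_def)

lemma simple_no_loop: "simple_graph V E \<Longrightarrow> {a, a} \<notin> E"
  unfolding simple_graph_def by (auto simp: doubleton_eq_iff)

lemma simple_edge_in: "simple_graph V E \<Longrightarrow> {u, v} \<in> E \<Longrightarrow> u \<in> V \<and> v \<in> V"
  unfolding simple_graph_def by (auto simp: doubleton_eq_iff)

lemma sw_sw[simp]: "sw (sw x) = x" by (simp add: sw_def)
lemma sw_mem[simp]: "sw x \<in> A \<times> UNIV \<longleftrightarrow> x \<in> A \<times> UNIV" by (auto simp: sw_def mem_Times_iff)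
lemma sw_neq: "sw x \<noteq> x" by (cases x) (simp add: sw_def)
lemma fst_sw[simp]: "fst (sw x) = fst x" by (simp add: sw_def)
lemma snd_sw[simp]: "snd (sw x) = (\<not> snd x)" by (simp add: sw_def)

lemma kiso_basic:
  assumes "kiso VG EG \<phi> V E"
  shows "x \<in> VG \<times> UNIV \<Longrightarrow> \<phi> x \<in> V"
    and "x \<in> VG \<times> UNIV \<Longrightarrow> inv_into (VG \<times> UNIV) \<phi> (\<phi> x) = x"
    and "v \<in> V \<Longrightarrow> inv_into (VG \<times> UNIV) \<phi> v \<in> VG \<times> UNIV"
    and "v \<in> V \<Longrightarrow> \<phi> (inv_into (VG \<times> UNIV) \<phi> v) = v"
    and "x \<in> VG \<times> UNIV \<Longrightarrow> y \<in> VG \<times> UNIV \<Longrightarrow> {\<phi> x, \<phi> y} \<in> E \<longleftrightarrow> {x, y} \<in> snd (kronecker_cover VG EG)"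
    and "x \<in> VG \<times> UNIV \<Longrightarrow> y \<in> VG \<times> UNIV \<Longrightarrow> \<phi> x = \<phi> y \<longleftrightarrow> x = y"
  using assms unfolding kiso_def
  by (auto simp: bij_betw_def inj_on_def intro: inv_into_into f_inv_into_f)

lemma kiso_cover:
  assumes "kiso VG EG \<phi> V E" "v \<in> V"
  obtains x where "x \<in> VG \<times> UNIV" "v = \<phi> x"
  using kiso_basic(3,4)[OF assms(1) assms(2)] by metis

lemma pol_phi:
  assumes "kiso VG EG \<phi> V E" "x \<in> VG \<times> UNIV"
  shows "pol VG \<phi> V (\<phi> x) = \<phi> (sw x)"
  using kiso_basic[OF assms(1)] assms(2) unfolding pol_def by simp

lemma invol_bij:
  assumes "\<And>v. v \<in> V \<Longrightarrow> f v \<in> V \<and> f (f v) = v"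
  shows "bij_betw f V V"
  by (rule bij_betw_byWitness[where f'=f]) (use assms in auto)

lemma pol_in_polarities:
  assumes sG: "simple_graph VG EG" and ki: "kiso VG EG \<phi> V E"
    and sK: "simple_graph V E" and cK: "connected_graph V E"
    and bp: "bipartition V E V1 V2"
  shows "pol VG \<phi> V \<in> polarities V E V1 V2"
proof -
  let ?p = "pol VG \<phi> V"
  let ?KV = "VG \<times> (UNIV :: bool set)"
  note kb = kiso_basic[OF ki]
  have pV: "?p v \<in> V" if vV: "v \<in> V" for v
  proof -
    obtain x where x: "x \<in> ?KV" "v = \<phi> x" using kiso_cover[OF ki vV] by blast
    show ?thesis using x pol_phi[OF ki] kb(1)[of "sw x"] by simp
  qed
  have pp: "?p (?p v) = v" if vV: "v \<in> V" for v
  proof -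
    obtain x where x: "x \<in> ?KV" "v = \<phi> x" using kiso_cover[OF ki vV] by blast
    show ?thesis using x pol_phi[OF ki] by simp
  qed
  have pn: "?p v \<noteq> v" if vV: "v \<in> V" for v
  proof -
    obtain x where x: "x \<in> ?KV" "v = \<phi> x" using kiso_cover[OF ki vV] by blast
    show ?thesis using x pol_phi[OF ki] kb(6)[of "sw x" x] sw_neq[of x] by simp
  qed
  have adj: "{u, v} \<in> E \<longleftrightarrow> {?p u, ?p v} \<in> E" if uvV: "u \<in> V" "v \<in> V" for u v
  proof -
    obtain x where x: "x \<in> ?KV" "u = \<phi> x" using kiso_cover[OF ki uvV(1)] by blast
    obtain y where y: "y \<in> ?KV" "v = \<phi> y" using kiso_cover[OF ki uvV(2)] by blast
    have "{x, y} \<in> snd (kronecker_cover VG EG) \<longleftrightarrow> {sw x, sw y} \<in> snd (kronecker_cover VG EG)"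
      unfolding kc_edge' by auto
    then show ?thesis using x y pol_phi[OF ki] kb(5) by simp
  qed
  have noE: "{v, ?p v} \<notin> E" if vV: "v \<in> V" for v
  proof -
    obtain x where x: "x \<in> ?KV" "v = \<phi> x" using kiso_cover[OF ki vV] by blast
    have "{x, sw x} \<notin> snd (kronecker_cover VG EG)"
      unfolding kc_edge' using simple_no_loop[OF sG] by simp
    then show ?thesis using x pol_phi[OF ki] kb(5) by simp
  qed
  have aut: "?p \<in> graph_aut V E"
  proof -
    have "bij_betw ?p V V" using invol_bij[of V ?p] pV pp by blast
    moreover have "\<forall>x. x \<notin> V \<longrightarrow> ?p x = x" by (simp add: pol_def)
    ultimately show ?thesis unfolding graph_aut_def using adj by blast
  qed
  define s where "s v = snd (inv_into ?KV \<phi> v)" for v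
  have sedge: "(u \<in> V1 \<longleftrightarrow> s u) \<longleftrightarrow> (v \<in> V1 \<longleftrightarrow> s v)" if e: "{u, v} \<in> E" for u v
  proof -
    have uv: "u \<in> V" "v \<in> V" using simple_edge_in[OF sK e] by auto
    obtain x where x: "x \<in> ?KV" "u = \<phi> x" using kiso_cover[OF ki uv(1)] by blast
    obtain y where y: "y \<in> ?KV" "v = \<phi> y" using kiso_cover[OF ki uv(2)] by blast
    have "snd x \<noteq> snd y" using e x y kb(5) kc_edge' by metis
    then have "s u \<noteq> s v" using x y kb(2) by (simp add: s_def)
    moreover have "u \<in> V1 \<longleftrightarrow> v \<notin> V1" using bp e unfolding bipartition_def by blast
    ultimately show ?thesis by blast
  qed
  obtain x0 where x0: "x0 \<in> V" using cK unfolding connected_graph_def by auto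
  have inv: "(v \<in> V1 \<longleftrightarrow> s v) \<longleftrightarrow> (x0 \<in> V1 \<longleftrightarrow> s x0)" if "v \<in> V" for v
  proof -
    have "(\<lambda>x y. {x, y} \<in> E)\<^sup>*\<^sup>* x0 v" using cK x0 that unfolding connected_graph_def by blast
    then show ?thesis
    proof (induction rule: rtranclp_induct)
      case base then show ?case by simp
    next
      case (step y z) then show ?case using sedge[of y z] by simp
    qed
  qed
  have sp: "s (?p v) = (\<not> s v)" if vV: "v \<in> V" for v
  proof -
    obtain x where x: "x \<in> ?KV" "v = \<phi> x" using kiso_cover[OF ki vV] by blast
    show ?thesis using x pol_phi[OF ki] kb(2) by (simp add: s_def)
  qed
  have side: "v \<in> V1 \<longleftrightarrow> ?p v \<notin> V1" if "v \<in> V" for v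
    using inv[OF that] inv[OF pV[OF that]] sp[OF that] by blast
  have V12: "V1 \<union> V2 = V" "V1 \<inter> V2 = {}" using bp unfolding bipartition_def by auto
  have img: "?p ` V1 = V2"
  proof
    show "?p ` V1 \<subseteq> V2" using side pV V12 by blast
    show "V2 \<subseteq> ?p ` V1"
    proof
      fix w assume w: "w \<in> V2"
      then have "w \<in> V" "w \<notin> V1" using V12 by auto
      then have "?p w \<in> V1" using side by blast
      then show "w \<in> ?p ` V1" using pp \<open>w \<in> V\<close> by (metis image_eqI)
    qed
  qed
  show ?thesis unfolding polarities_def using aut pp pn img noE by auto
qed


lemma aut_bij:
  assumes "\<alpha> \<in> graph_aut V E"
  shows "bij \<alpha>"
proof -
  have b: "bij_betw \<alpha> V V" and o: "\<And>x. x \<notin> V \<Longrightarrow> \<alpha> x = x"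
    using assms unfolding graph_aut_def by auto
  have "inj \<alpha>"
  proof (rule injI)
    fix a b assume e: "\<alpha> a = \<alpha> b"
    show "a = b"
    proof (cases "a \<in> V"; cases "b \<in> V")
      assume "a \<in> V" "b \<in> V" then show ?thesis using e b by (auto simp: bij_betw_def inj_on_def)
    next
      assume "a \<in> V" "b \<notin> V" then show ?thesis using e b o[of b] by (auto simp: bij_betw_def)
    next
      assume "a \<notin> V" "b \<in> V" then show ?thesis using e b o[of a] by (auto simp: bij_betw_def)
    next
      assume "a \<notin> V" "b \<notin> V" then show ?thesis using e o by auto
    qed
  qed
  moreover have "surj \<alpha>"
  proof -
    have "y \<in> range \<alpha>" for y
    proof (cases "y \<in> V")
      case True then show ?thesis using b by (auto simp: bij_betw_def)
    next
      case False then show ?thesis using o[of y] by (metis rangeI)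
    qed
    then show ?thesis by auto
  qed
  ultimately show ?thesis by (simp add: bij_def)
qed

lemma conj_char:
  assumes "\<pi> \<in> polarities V E V1 V2" "\<pi>' \<in> polarities V E V1 V2" "\<alpha> \<in> graph_aut V E"
    and c: "\<And>x. \<pi>' (\<alpha> x) = \<alpha> (\<pi> x)"
  shows "(\<pi>, \<pi>') \<in> polarity_conj V E V1 V2"
proof -
  have bj: "bij \<alpha>" using aut_bij[OF assms(3)] .
  have "\<pi>' = \<alpha> \<circ> \<pi> \<circ> inv \<alpha>"
  proof
    fix x
    have "\<pi>' x = \<pi>' (\<alpha> (inv \<alpha> x))" using bj by (simp add: bij_is_surj surj_f_inv_f)
    also have "\<dots> = (\<alpha> \<circ> \<pi> \<circ> inv \<alpha>) x" using c by simp
    finally show "\<pi>' x = (\<alpha> \<circ> \<pi> \<circ> inv \<alpha>) x" .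
  qed
  then show ?thesis unfolding polarity_conj_def using assms by blast
qed

lemma conj_elim:
  assumes "(\<pi>, \<pi>') \<in> polarity_conj V E V1 V2"
  obtains \<alpha> where "\<alpha> \<in> graph_aut V E" "\<And>x. \<pi>' (\<alpha> x) = \<alpha> (\<pi> x)"
proof -
  obtain \<alpha> where a: "\<alpha> \<in> graph_aut V E" "\<pi>' = \<alpha> \<circ> \<pi> \<circ> inv \<alpha>"
    using assms unfolding polarity_conj_def by blast
  have bj: "bij \<alpha>" using aut_bij[OF a(1)] .
  have "\<pi>' (\<alpha> x) = \<alpha> (\<pi> x)" for x using a(2) bj by (simp add: bij_is_inj)
  then show ?thesis using that a(1) by blast
qed

lemma L2:
  assumes k1: "kiso VG EG \<phi> V E" and k2: "kiso VH EH \<psi> V E"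
    and g: "bij_betw g VG VH" and ge: "\<forall>u\<in>VG. \<forall>v\<in>VG. {u, v} \<in> EG \<longleftrightarrow> {g u, g v} \<in> EH"
  shows "\<exists>\<alpha>\<in>graph_aut V E. \<forall>x. pol VH \<psi> V (\<alpha> x) = \<alpha> (pol VG \<phi> V x)"
proof -
  let ?KG = "VG \<times> (UNIV :: bool set)" and ?KH = "VH \<times> (UNIV :: bool set)"
  define \<theta> where "\<theta> x = (g (fst x), snd x :: bool)" for x
  have th_in: "\<theta> x \<in> ?KH" if "x \<in> ?KG" for x
    using that g by (auto simp: \<theta>_def bij_betw_def mem_Times_iff)
  have th_sw: "\<theta> (sw x) = sw (\<theta> x)" for x by (simp add: \<theta>_def sw_def)
  have th_bij: "bij_betw \<theta> ?KG ?KH"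
  proof (rule bij_betw_byWitness[where f'="\<lambda>y. (inv_into VG g (fst y), snd y)"])
    show "\<forall>a\<in>?KG. (inv_into VG g (fst (\<theta> a)), snd (\<theta> a)) = a"
      using g by (auto simp: \<theta>_def bij_betw_def)
    show "\<forall>a'\<in>?KH. \<theta> (inv_into VG g (fst a'), snd a') = a'"
      using g by (auto simp: \<theta>_def bij_betw_def f_inv_into_f)
    show "\<theta> ` ?KG \<subseteq> ?KH" using th_in by blast
    show "(\<lambda>y. (inv_into VG g (fst y), snd y)) ` ?KH \<subseteq> ?KG"
      using g by (auto simp: bij_betw_def inv_into_into)
  qed
  have th_e: "{x, y} \<in> snd (kronecker_cover VG EG) \<longleftrightarrow> {\<theta> x, \<theta> y} \<in> snd (kronecker_cover VH EH)"
    if "x \<in> ?KG" "y \<in> ?KG" for x y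
    using that ge unfolding kc_edge' by (auto simp: \<theta>_def mem_Times_iff)
  note kb1 = kiso_basic[OF k1] and kb2 = kiso_basic[OF k2]
  define \<alpha> where "\<alpha> x = (if x \<in> V then \<psi> (\<theta> (inv_into ?KG \<phi> x)) else x)" for x
  have al: "\<alpha> (\<phi> x) = \<psi> (\<theta> x)" if "x \<in> ?KG" for x
    using that kb1 by (simp add: \<alpha>_def)
  have h1: "bij_betw (inv_into ?KG \<phi>) V ?KG" using k1 unfolding kiso_def by (simp add: bij_betw_inv_into)
  have h3: "bij_betw \<psi> ?KH V" using k2 unfolding kiso_def by simp
  have "bij_betw (\<psi> \<circ> \<theta> \<circ> inv_into ?KG \<phi>) V V"
    using bij_betw_trans[OF bij_betw_trans[OF h1 th_bij] h3] by (simp add: comp_assoc)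
  moreover have "bij_betw \<alpha> V V = bij_betw (\<psi> \<circ> \<theta> \<circ> inv_into ?KG \<phi>) V V"
    by (rule bij_betw_cong) (simp add: \<alpha>_def)
  ultimately have "bij_betw \<alpha> V V" by simp
  moreover have "\<forall>x. x \<notin> V \<longrightarrow> \<alpha> x = x" by (simp add: \<alpha>_def)
  moreover have "\<forall>u\<in>V. \<forall>v\<in>V. {u, v} \<in> E \<longleftrightarrow> {\<alpha> u, \<alpha> v} \<in> E"
  proof (intro ballI)
    fix u v assume uv: "u \<in> V" "v \<in> V"
    obtain x where x: "x \<in> ?KG" "u = \<phi> x" using kiso_cover[OF k1 uv(1)] by blast
    obtain y where y: "y \<in> ?KG" "v = \<phi> y" using kiso_cover[OF k1 uv(2)] by blast
    show "{u, v} \<in> E \<longleftrightarrow> {\<alpha> u, \<alpha> v} \<in> E"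
      using x y al kb1(5) kb2(5) th_in th_e by simp
  qed
  ultimately have aut: "\<alpha> \<in> graph_aut V E" unfolding graph_aut_def by blast
  have "pol VH \<psi> V (\<alpha> z) = \<alpha> (pol VG \<phi> V z)" for z
  proof (cases "z \<in> V")
    case False then show ?thesis by (simp add: \<alpha>_def pol_def)
  next
    case True
    obtain x where x: "x \<in> ?KG" "z = \<phi> x" using kiso_cover[OF k1 True] by blast
    have "pol VH \<psi> V (\<alpha> z) = \<psi> (sw (\<theta> x))" using x al pol_phi[OF k2] th_in by simp
    moreover have "\<alpha> (pol VG \<phi> V z) = \<psi> (\<theta> (sw x))" using x al pol_phi[OF k1] by simp
    ultimately show ?thesis using th_sw by simp
  qed
  then show ?thesis using aut by blast
qed


lemma L3:
  assumes k1: "kiso VG EG \<phi> V E" and k2: "kiso VH EH \<psi> V E"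
    and a: "\<alpha> \<in> graph_aut V E" and c: "\<And>x. pol VH \<psi> V (\<alpha> x) = \<alpha> (pol VG \<phi> V x)"
  shows "graph_iso (VG, EG) (VH, EH)"
proof -
  let ?KG = "VG \<times> (UNIV :: bool set)" and ?KH = "VH \<times> (UNIV :: bool set)"
  note kb1 = kiso_basic[OF k1] and kb2 = kiso_basic[OF k2]
  have ab: "bij_betw \<alpha> V V" and ae: "\<forall>u\<in>V. \<forall>v\<in>V. {u, v} \<in> E \<longleftrightarrow> {\<alpha> u, \<alpha> v} \<in> E"
    using a unfolding graph_aut_def by auto
  have aV: "\<alpha> v \<in> V" if "v \<in> V" for v using ab that by (auto simp: bij_betw_def)
  have ainj: "\<alpha> u = \<alpha> v \<longleftrightarrow> u = v" if "u \<in> V" "v \<in> V" for u v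
    using ab that by (auto simp: bij_betw_def inj_on_def)
  define \<theta> where "\<theta> x = inv_into ?KH \<psi> (\<alpha> (\<phi> x))" for x
  have th_in: "\<theta> x \<in> ?KH" if "x \<in> ?KG" for x
    unfolding \<theta>_def using that kb1(1) aV kb2(3) by blast
  have psth: "\<psi> (\<theta> x) = \<alpha> (\<phi> x)" if "x \<in> ?KG" for x
    unfolding \<theta>_def using that kb1(1) aV kb2(4) by blast
  have th_inj: "\<theta> x = \<theta> y \<longleftrightarrow> x = y" if "x \<in> ?KG" "y \<in> ?KG" for x y
    by (metis psth that ainj kb1(1) kb1(6))
  have th_surj: "\<exists>x\<in>?KG. \<theta> x = z" if "z \<in> ?KH" for z
  proof -
    have "\<psi> z \<in> V" using kb2(1) that .
    then obtain w where w: "w \<in> V" "\<alpha> w = \<psi> z" using ab by (metis bij_betw_def imageE)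
    obtain x where x: "x \<in> ?KG" "w = \<phi> x" using kiso_cover[OF k1 w(1)] by blast
    have "\<psi> (\<theta> x) = \<psi> z" using psth x w by simp
    then have "\<theta> x = z" using kb2(6) th_in x that by blast
    then show ?thesis using x by blast
  qed
  have th_e: "{x, y} \<in> snd (kronecker_cover VG EG) \<longleftrightarrow> {\<theta> x, \<theta> y} \<in> snd (kronecker_cover VH EH)"
    if "x \<in> ?KG" "y \<in> ?KG" for x y
  proof -
    have "{\<theta> x, \<theta> y} \<in> snd (kronecker_cover VH EH) \<longleftrightarrow> {\<psi> (\<theta> x), \<psi> (\<theta> y)} \<in> E"
      using kb2(5) th_in that by simp
    also have "\<dots> \<longleftrightarrow> {\<phi> x, \<phi> y} \<in> E" using psth that ae kb1(1) by simp
    also have "\<dots> \<longleftrightarrow> {x, y} \<in> snd (kronecker_cover VG EG)" using kb1(5) that by simp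
    finally show ?thesis by simp
  qed
  have th_sw: "\<theta> (sw x) = sw (\<theta> x)" if "x \<in> ?KG" for x
  proof -
    have "\<psi> (\<theta> (sw x)) = \<alpha> (\<phi> (sw x))" using psth that by simp
    also have "\<dots> = \<alpha> (pol VG \<phi> V (\<phi> x))" using pol_phi[OF k1 that] by simp
    also have "\<dots> = pol VH \<psi> V (\<alpha> (\<phi> x))" using c by simp
    also have "\<dots> = pol VH \<psi> V (\<psi> (\<theta> x))" using psth that by simp
    also have "\<dots> = \<psi> (sw (\<theta> x))" using pol_phi[OF k2 th_in[OF that]] .
    finally show ?thesis using kb2(6) th_in that by simp
  qed
  define g where "g v = fst (\<theta> (v, True))" for v
  have gb: "fst (\<theta> (v, b)) = g v" if "v \<in> VG" for v b
  proof (cases b)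
    case True then show ?thesis by (simp add: g_def)
  next
    case False
    have "\<theta> (v, False) = \<theta> (sw (v, True))" by (simp add: sw_def)
    also have "\<dots> = sw (\<theta> (v, True))" using th_sw that by simp
    finally show ?thesis using False by (simp add: g_def)
  qed
  have thform: "\<theta> (v, b) = (g v, snd (\<theta> (v, b)))" if "v \<in> VG" for v b
    using gb[OF that] by (metis prod.collapse)
  have gin: "g v \<in> VH" if "v \<in> VG" for v using th_in[of "(v, True)"] that by (auto simp: g_def mem_Times_iff)
  have ginj: "u = v" if "u \<in> VG" "v \<in> VG" "g u = g v" for u v
  proof -
    have "\<theta> (v, True) = \<theta> (u, True) \<or> \<theta> (v, True) = \<theta> (u, False)"
      using thform[of u True] thform[of u False] thform[of v True] that
        th_sw[of "(u, True)"]
      by (cases "snd (\<theta> (u, True))"; cases "snd (\<theta> (v, True))") (auto simp: sw_def)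
    then show ?thesis using th_inj that by auto
  qed
  have gsurj: "w \<in> g ` VG" if wH: "w \<in> VH" for w
  proof -
    obtain x where x: "x \<in> ?KG" "\<theta> x = (w, True)" using th_surj[of "(w, True)"] wH by auto
    then show ?thesis using gb[of "fst x" "snd x"] by (metis fst_conv imageI mem_Times_iff prod.collapse)
  qed
  have "bij_betw g VG VH"
    unfolding bij_betw_def inj_on_def using ginj gin gsurj by blast
  moreover have "{u, v} \<in> EG \<longleftrightarrow> {g u, g v} \<in> EH" if uv: "u \<in> VG" "v \<in> VG" for u v
  proof
    assume e: "{u, v} \<in> EG"
    then have "{(u, True), (v, False)} \<in> snd (kronecker_cover VG EG)" by (simp add: kc_edge)
    then have "{\<theta> (u, True), \<theta> (v, False)} \<in> snd (kronecker_cover VH EH)" using th_e uv by simp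
    then show "{g u, g v} \<in> EH" using gb uv unfolding kc_edge' by simp
  next
    assume e: "{g u, g v} \<in> EH"
    obtain c where cdef: "\<theta> (u, True) = (g u, c)" using thform uv by blast
    obtain y where y: "y \<in> ?KG" "\<theta> y = (g v, \<not> c)" using th_surj[of "(g v, \<not> c)"] gin uv by auto
    have "g (fst y) = g v" using gb[of "fst y" "snd y"] y by (auto simp: mem_Times_iff)
    then have fy: "fst y = v" using ginj y uv by (auto simp: mem_Times_iff)
    have "{\<theta> (u, True), \<theta> y} \<in> snd (kronecker_cover VH EH)" using cdef y e by (simp add: kc_edge)
    then have "{(u, True), y} \<in> snd (kronecker_cover VG EG)" using th_e uv y by simp
    then show "{u, v} \<in> EG" using fy unfolding kc_edge' by simp
  qed
  ultimately show ?thesis unfolding graph_iso_def by auto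
qed


lemma L4:
  fixes h :: "'a \<Rightarrow> 'b"
  assumes sK: "simple_graph V E" and bp: "bipartition V E V1 V2" and h: "inj_on h V1"
    and p: "\<pi> \<in> polarities V E V1 V2"
    and GE: "GE = {{h u, h w} | u w. u \<in> V1 \<and> w \<in> V1 \<and> {u, \<pi> w} \<in> E}"
    and ph: "\<phi> = (\<lambda>x. if snd x then inv_into V1 h (fst x) else \<pi> (inv_into V1 h (fst x)))"
  shows "simple_graph (h ` V1) GE" "kiso (h ` V1) GE \<phi> V E" "pol (h ` V1) \<phi> V = \<pi>"
proof -
  have pa: "\<pi> \<in> graph_aut V E" and pp: "\<And>v. v \<in> V \<Longrightarrow> \<pi> (\<pi> v) = v"
    and pimg: "\<pi> ` V1 = V2" and noE: "\<And>v. v \<in> V \<Longrightarrow> {v, \<pi> v} \<notin> E"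
    using p unfolding polarities_def by auto
  have pb: "bij_betw \<pi> V V" and pout: "\<And>x. x \<notin> V \<Longrightarrow> \<pi> x = x"
    and pe: "\<And>u v. u \<in> V \<Longrightarrow> v \<in> V \<Longrightarrow> {u, v} \<in> E \<longleftrightarrow> {\<pi> u, \<pi> v} \<in> E"
    using pa unfolding graph_aut_def by auto
  have V12: "V1 \<union> V2 = V" "V1 \<inter> V2 = {}"
    and bpe: "\<And>u v. {u, v} \<in> E \<Longrightarrow> (u \<in> V1 \<and> v \<in> V2) \<or> (u \<in> V2 \<and> v \<in> V1)"
    using bp unfolding bipartition_def by auto
  have V1V: "u \<in> V1 \<Longrightarrow> u \<in> V" for u using V12 by auto
  have pV2: "u \<in> V1 \<Longrightarrow> \<pi> u \<in> V2" for u using pimg by auto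
  have pV1: "v \<in> V2 \<Longrightarrow> \<pi> v \<in> V1" for v using pimg pp V1V by auto
  have pnV1: "u \<in> V1 \<Longrightarrow> \<pi> u \<notin> V1" for u using pV2 V12 by auto
  have V2V: "u \<in> V2 \<Longrightarrow> u \<in> V" for u using V12 by auto
  have kh: "u \<in> V1 \<Longrightarrow> inv_into V1 h (h u) = u" for u using h by (simp add: inv_into_f_f)
  have symE: "{w, \<pi> u} \<in> E \<longleftrightarrow> {u, \<pi> w} \<in> E" if "u \<in> V" "w \<in> V" for u w
  proof -
    have "{w, \<pi> u} \<in> E \<longleftrightarrow> {\<pi> w, \<pi> (\<pi> u)} \<in> E" using pe[of w "\<pi> u"] that pb
      by (auto simp: bij_betw_def)
    also have "\<dots> \<longleftrightarrow> {u, \<pi> w} \<in> E" using pp that by (simp add: insert_commute)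
    finally show ?thesis .
  qed
  have V1noE: "{u, w} \<notin> E" if "u \<in> V1" "w \<in> V1" for u w
    using bpe[of u w] that V12 by auto
  have V2noE: "{u, w} \<notin> E" if "u \<in> V2" "w \<in> V2" for u w
    using bpe[of u w] that V12 by auto
  have GEiff: "{h u, h w} \<in> GE \<longleftrightarrow> {u, \<pi> w} \<in> E" if uw: "u \<in> V1" "w \<in> V1" for u w
  proof
    assume "{h u, h w} \<in> GE"
    then obtain u' w' where e: "{h u, h w} = {h u', h w'}" "u' \<in> V1" "w' \<in> V1" "{u', \<pi> w'} \<in> E"
      unfolding GE by blast
    then have "(h u = h u' \<and> h w = h w') \<or> (h u = h w' \<and> h w = h u')" by (auto simp: doubleton_eq_iff)
    then have "(u = u' \<and> w = w') \<or> (u = w' \<and> w = u')" using h uw e(2,3) by (auto simp: inj_on_def)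
    then show "{u, \<pi> w} \<in> E" using e(4) symE uw V1V by auto
  next
    assume "{u, \<pi> w} \<in> E" then show "{h u, h w} \<in> GE" unfolding GE using uw by blast
  qed
  show "simple_graph (h ` V1) GE"
    unfolding simple_graph_def
  proof
    show "finite (h ` V1)" using sK V1V unfolding simple_graph_def by (meson finite_imageI finite_subset subsetI)
    show "\<forall>e\<in>GE. \<exists>u v. e = {u, v} \<and> u \<noteq> v \<and> u \<in> h ` V1 \<and> v \<in> h ` V1"
    proof
      fix e assume "e \<in> GE"
      then obtain u w where e: "e = {h u, h w}" "u \<in> V1" "w \<in> V1" "{u, \<pi> w} \<in> E" unfolding GE by blast
      have "u \<noteq> w" using e noE V1V by auto
      then have "h u \<noteq> h w" using h e by (auto simp: inj_on_def)
      then show "\<exists>u v. e = {u, v} \<and> u \<noteq> v \<and> u \<in> h ` V1 \<and> v \<in> h ` V1" using e by blast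
    qed
  qed
  let ?A = "h ` V1 \<times> (UNIV :: bool set)"
  have phh: "\<phi> (h u, b) = (if b then u else \<pi> u)" if "u \<in> V1" for u b using kh that by (simp add: ph)
  have bij: "bij_betw \<phi> ?A V"
  proof (rule bij_betw_byWitness[where f'="\<lambda>v. if v \<in> V1 then (h v, True) else (h (\<pi> v), False)"])
    show "\<forall>a\<in>?A. (\<lambda>v. if v \<in> V1 then (h v, True) else (h (\<pi> v), False)) (\<phi> a) = a"
      using phh pnV1 pp V1V by auto
    show "\<forall>a'\<in>V. \<phi> ((\<lambda>v. if v \<in> V1 then (h v, True) else (h (\<pi> v), False)) a') = a'"
    proof
      fix v assume v: "v \<in> V"
      show "\<phi> ((\<lambda>v. if v \<in> V1 then (h v, True) else (h (\<pi> v), False)) v) = v"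
      proof (cases "v \<in> V1")
        case True then show ?thesis using phh by simp
      next
        case False then have "v \<in> V2" using v V12 by auto
        then show ?thesis using False phh[of "\<pi> v" False] pV1 pp v by simp
      qed
    qed
    show "\<phi> ` ?A \<subseteq> V" using phh V1V pV2 V2V by auto
    show "(\<lambda>v. if v \<in> V1 then (h v, True) else (h (\<pi> v), False)) ` V \<subseteq> ?A"
      using pV1 V12 by auto
  qed
  have adj: "{x, y} \<in> snd (kronecker_cover (h ` V1) GE) \<longleftrightarrow> {\<phi> x, \<phi> y} \<in> E"
    if xyA: "x \<in> ?A" "y \<in> ?A" for x y
  proof -
    obtain u a where x: "x = (h u, a)" "u \<in> V1" using xyA(1) by auto
    obtain w b where y: "y = (h w, b)" "w \<in> V1" using xyA(2) by auto
    have L: "{x, y} \<in> snd (kronecker_cover (h ` V1) GE) \<longleftrightarrow> {u, \<pi> w} \<in> E \<and> a \<noteq> b"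
      using x y GEiff[of u w] kc_edge[of "h u" a "h w" b] by simp
    show ?thesis
      using L x y phh V1noE V2noE pV2 symE V1V
      by (cases a; cases b) (auto simp: insert_commute)
  qed
  show "kiso (h ` V1) GE \<phi> V E" unfolding kiso_def using bij adj by blast
  show "pol (h ` V1) \<phi> V = \<pi>"
  proof
    fix v show "pol (h ` V1) \<phi> V v = \<pi> v"
    proof (cases "v \<in> V")
      case False then show ?thesis using pout by (simp add: pol_def)
    next
      case True
      have ki: "kiso (h ` V1) GE \<phi> V E" unfolding kiso_def using bij adj by blast
      obtain x where x: "x \<in> ?A" "v = \<phi> x" using kiso_cover[OF ki True] by blast
      then obtain u b where ub: "x = (h u, b)" "u \<in> V1" by auto
      show ?thesis using pol_phi[OF ki x(1)] x ub phh pp V1V by (cases b) (auto simp: sw_def)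
    qed
  qed
qed


lemma graph_iso_refl: "graph_iso G G"
  unfolding graph_iso_def by (rule exI[of _ id]) simp

lemma graph_iso_sym: assumes "graph_iso G H" shows "graph_iso H G"
proof -
  obtain f where f: "bij_betw f (fst G) (fst H)"
    "\<forall>u\<in>fst G. \<forall>v\<in>fst G. {u, v} \<in> snd G \<longleftrightarrow> {f u, f v} \<in> snd H"
    using assms unfolding graph_iso_def by blast
  let ?g = "inv_into (fst G) f"
  have "bij_betw ?g (fst H) (fst G)" using f(1) by (rule bij_betw_inv_into)
  moreover have "\<forall>u\<in>fst H. \<forall>v\<in>fst H. {u, v} \<in> snd H \<longleftrightarrow> {?g u, ?g v} \<in> snd G"
  proof (intro ballI)
    fix u v assume uv: "u \<in> fst H" "v \<in> fst H"
    have gi: "?g u \<in> fst G" "?g v \<in> fst G" using uv f(1) by (auto simp: bij_betw_def inv_into_into)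
    have "f (?g u) = u" "f (?g v) = v" using uv f(1) by (auto simp: bij_betw_def f_inv_into_f)
    then show "{u, v} \<in> snd H \<longleftrightarrow> {?g u, ?g v} \<in> snd G" using f(2) gi by metis
  qed
  ultimately show ?thesis unfolding graph_iso_def by blast
qed

lemma graph_iso_trans: assumes "graph_iso G H" "graph_iso H K" shows "graph_iso G K"
proof -
  obtain f where f: "bij_betw f (fst G) (fst H)"
    "\<forall>u\<in>fst G. \<forall>v\<in>fst G. {u, v} \<in> snd G \<longleftrightarrow> {f u, f v} \<in> snd H"
    using assms(1) unfolding graph_iso_def by blast
  obtain g where g: "bij_betw g (fst H) (fst K)"
    "\<forall>u\<in>fst H. \<forall>v\<in>fst H. {u, v} \<in> snd H \<longleftrightarrow> {g u, g v} \<in> snd K"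
    using assms(2) unfolding graph_iso_def by blast
  have "bij_betw (g \<circ> f) (fst G) (fst K)" using f(1) g(1) by (rule bij_betw_trans)
  moreover have "\<forall>u\<in>fst G. \<forall>v\<in>fst G. {u, v} \<in> snd G \<longleftrightarrow> {(g \<circ> f) u, (g \<circ> f) v} \<in> snd K"
  proof (intro ballI)
    fix u v assume uv: "u \<in> fst G" "v \<in> fst G"
    have fi: "f u \<in> fst H" "f v \<in> fst H" using f(1) uv by (auto simp: bij_betw_def)
    show "{u, v} \<in> snd G \<longleftrightarrow> {(g \<circ> f) u, (g \<circ> f) v} \<in> snd K"
      using f(2) g(2) uv fi by simp
  qed
  ultimately show ?thesis unfolding graph_iso_def by blast
qed

lemma iso_rel_equiv: "equiv S (iso_rel S)"
proof (rule equivI)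
  show "iso_rel S \<subseteq> S \<times> S" unfolding iso_rel_def by auto
  show "refl_on S (iso_rel S)" unfolding refl_on_def iso_rel_def using graph_iso_refl by auto
  show "sym (iso_rel S)" unfolding sym_def iso_rel_def using graph_iso_sym by auto
  show "trans (iso_rel S)" unfolding trans_def iso_rel_def using graph_iso_trans by auto
qed

lemma quot_bij:
  assumes eqR: "equiv A R" and SB: "S \<subseteq> B \<times> B" and fB: "f ` B \<subseteq> A"
    and iff: "\<And>b b'. b \<in> B \<Longrightarrow> b' \<in> B \<Longrightarrow> (b, b') \<in> S \<longleftrightarrow> (f b, f b') \<in> R"
    and sur: "\<And>a. a \<in> A \<Longrightarrow> \<exists>b\<in>B. (f b, a) \<in> R"
  shows "bij_betw (\<lambda>X. R `` (f ` X)) (B // S) (A // R)"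
proof -
  have Rrefl: "(a, a) \<in> R" if "a \<in> A" for a using eqR that unfolding equiv_def refl_on_def by blast
  have Rtr: "(a, c) \<in> R" if "(a, b) \<in> R" "(b, c) \<in> R" for a b c
    using eqR that unfolding equiv_def trans_def by blast
  have Rsym: "(b, a) \<in> R" if "(a, b) \<in> R" for a b
    using eqR that unfolding equiv_def sym_def by blast
  have key: "S `` {b} = {b' \<in> B. (f b, f b') \<in> R}" if "b \<in> B" for b
  proof
    show "S `` {b} \<subseteq> {b' \<in> B. (f b, f b') \<in> R}" using SB iff that by auto
    show "{b' \<in> B. (f b, f b') \<in> R} \<subseteq> S `` {b}" using iff that by auto
  qed
  have img: "R `` (f ` (S `` {b})) = R `` {f b}" if b: "b \<in> B" for b
  proof
    show "R `` (f ` (S `` {b})) \<subseteq> R `` {f b}"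
    proof
      fix z assume "z \<in> R `` (f ` (S `` {b}))"
      then obtain b' where "b' \<in> S `` {b}" "(f b', z) \<in> R" by auto
      then have "(f b, f b') \<in> R" "(f b', z) \<in> R" using key[OF b] by auto
      then show "z \<in> R `` {f b}" using Rtr by auto
    qed
    have "f b \<in> A" using fB b by auto
    then have "b \<in> S `` {b}" using key[OF b] b Rrefl by auto
    then show "R `` {f b} \<subseteq> R `` (f ` (S `` {b}))" by auto
  qed
  show ?thesis unfolding bij_betw_def
  proof
    show "inj_on (\<lambda>X. R `` (f ` X)) (B // S)"
    proof (rule inj_onI)
      fix X Y assume X: "X \<in> B // S" and Y: "Y \<in> B // S" and e: "R `` (f ` X) = R `` (f ` Y)"
      obtain b where b: "b \<in> B" "X = S `` {b}" using X unfolding quotient_def by blast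
      obtain c where c: "c \<in> B" "Y = S `` {c}" using Y unfolding quotient_def by blast
      have "R `` {f b} = R `` {f c}" using e img[OF b(1)] img[OF c(1)] b(2) c(2) by simp
      moreover have "f c \<in> A" using fB c(1) by auto
      ultimately have bc: "(f b, f c) \<in> R" using eq_equiv_class[OF _ eqR] by blast
      have "{b' \<in> B. (f b, f b') \<in> R} = {b' \<in> B. (f c, f b') \<in> R}"
      proof (intro Collect_cong conj_cong refl iffI)
        fix b' assume "(f b, f b') \<in> R" then show "(f c, f b') \<in> R" using Rtr Rsym bc by blast
      next
        fix b' assume "(f c, f b') \<in> R" then show "(f b, f b') \<in> R" using Rtr bc by blast
      qed
      then show "X = Y" using key[OF b(1)] key[OF c(1)] b(2) c(2) by simp
    qed
    show "(\<lambda>X. R `` (f ` X)) ` (B // S) = A // R"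
    proof
      show "(\<lambda>X. R `` (f ` X)) ` (B // S) \<subseteq> A // R"
      proof
        fix Z assume "Z \<in> (\<lambda>X. R `` (f ` X)) ` (B // S)"
        then obtain X where X: "X \<in> B // S" "Z = R `` (f ` X)" by blast
        then obtain b where b: "b \<in> B" "X = S `` {b}" unfolding quotient_def by blast
        have "Z = R `` {f b}" using X(2) b img by simp
        moreover have "f b \<in> A" using fB b(1) by auto
        ultimately show "Z \<in> A // R" by (simp add: quotientI)
      qed
      show "A // R \<subseteq> (\<lambda>X. R `` (f ` X)) ` (B // S)"
      proof
        fix Z assume "Z \<in> A // R"
        then obtain a where a: "a \<in> A" "Z = R `` {a}" unfolding quotient_def by blast
        obtain b where b: "b \<in> B" "(f b, a) \<in> R" using sur a(1) by blast
        have "Z = R `` {f b}" using a(2) equiv_class_eq[OF eqR b(2)] by simp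
        also have "\<dots> = R `` (f ` (S `` {b}))" using img b(1) by simp
        finally have "Z = (\<lambda>X. R `` (f ` X)) (S `` {b})" by simp
        moreover have "S `` {b} \<in> B // S" using b(1) by (simp add: quotientI)
        ultimately show "Z \<in> (\<lambda>X. R `` (f ` X)) ` (B // S)" by blast
      qed
    qed
  qed
qed

lemma finite_aut:
  assumes "finite V"
  shows "finite (graph_aut V E)"
proof -
  have inj: "inj_on (\<lambda>f. restrict f V) (graph_aut V E)"
  proof (rule inj_onI)
    fix f g assume f: "f \<in> graph_aut V E" and g: "g \<in> graph_aut V E" and e: "restrict f V = restrict g V"
    show "f = g"
    proof
      fix x show "f x = g x"
      proof (cases "x \<in> V")
        case True then show ?thesis using fun_cong[OF e, of x] by simp
      next
        case False
        have "f x = x" "g x = x" using f g False unfolding graph_aut_def by blast+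
        then show ?thesis by simp
      qed
    qed
  qed
  have sub: "(\<lambda>f. restrict f V) ` graph_aut V E \<subseteq> Pi\<^sub>E V (\<lambda>_. V)"
  proof
    fix r assume "r \<in> (\<lambda>f. restrict f V) ` graph_aut V E"
    then obtain f where f: "f \<in> graph_aut V E" "r = restrict f V" by blast
    have "f ` V = V" using f(1) unfolding graph_aut_def bij_betw_def by blast
    then show "r \<in> Pi\<^sub>E V (\<lambda>_. V)" using f(2) by auto
  qed
  have fin: "finite (Pi\<^sub>E V (\<lambda>_. V))" using assms by (simp add: finite_PiE)
  have "finite ((\<lambda>f. restrict f V) ` graph_aut V E)" using sub fin by (rule finite_subset)
  from finite_imageD[OF this inj] show ?thesis .
qed


theorem proposition3:
  fixes V :: "'a set" and E :: "'a set set" and V1 V2 :: "'a set"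
  assumes "simple_graph V E"
    and "connected_graph V E"
    and "bipartition V E V1 V2"
  shows "finite (kc_preimages V E // iso_rel (kc_preimages V E)) \<and>
         card (kc_preimages V E // iso_rel (kc_preimages V E)) =
         card (polarities V E V1 V2 // polarity_conj V E V1 V2)"
proof -
  note sK = assms(1) and cK = assms(2) and bp = assms(3)
  have finV: "finite V" using sK unfolding simple_graph_def by blast
  have "V1 \<subseteq> V" using bp unfolding bipartition_def by blast
  then have "finite V1" using finV by (rule finite_subset)
  then obtain h :: "'a \<Rightarrow> nat" where h: "inj_on h V1"
    using finite_imp_inj_to_nat_seg by blast
  define GE where "GE \<pi> = {{h u, h w} | u w. u \<in> V1 \<and> w \<in> V1 \<and> {u, \<pi> w} \<in> E}" for \<pi> :: "'a \<Rightarrow> 'a"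
  define Ph where "Ph \<pi> = (\<lambda>x :: nat \<times> bool. if snd x then inv_into V1 h (fst x) else \<pi> (inv_into V1 h (fst x)))"
    for \<pi> :: "'a \<Rightarrow> 'a"
  define F where "F \<pi> = (h ` V1, GE \<pi>)" for \<pi>
  let ?A = "kc_preimages V E" and ?R = "iso_rel (kc_preimages V E)"
  let ?B = "polarities V E V1 V2" and ?S = "polarity_conj V E V1 V2"
  have L4s: "simple_graph (h ` V1) (GE \<pi>)" "kiso (h ` V1) (GE \<pi>) (Ph \<pi>) V E" "pol (h ` V1) (Ph \<pi>) V = \<pi>"
    if "\<pi> \<in> ?B" for \<pi>
    using L4[OF sK bp h that GE_def[of \<pi>] Ph_def[of \<pi>]] by auto
  have FA: "F \<pi> \<in> ?A" if "\<pi> \<in> ?B" for \<pi>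
    unfolding kc_preimages_def F_def using L4s[OF that] graph_iso_kc by fastforce
  have eqR: "equiv ?A ?R" by (rule iso_rel_equiv)
  have SB: "?S \<subseteq> ?B \<times> ?B" unfolding polarity_conj_def by auto
  have fB: "F ` ?B \<subseteq> ?A" using FA by blast
  have iff: "(b, b') \<in> ?S \<longleftrightarrow> (F b, F b') \<in> ?R" if b: "b \<in> ?B" "b' \<in> ?B" for b b'
  proof
    assume "(b, b') \<in> ?S"
    then obtain \<alpha> where a: "\<alpha> \<in> graph_aut V E" "\<And>x. b' (\<alpha> x) = \<alpha> (b x)" using conj_elim by metis
    have "graph_iso (h ` V1, GE b) (h ` V1, GE b')"
      by (rule L3[OF L4s(2)[OF b(1)] L4s(2)[OF b(2)] a(1)]) (simp add: L4s(3)[OF b(1)] L4s(3)[OF b(2)] a(2))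
    then show "(F b, F b') \<in> ?R" unfolding iso_rel_def using FA b by (simp add: F_def)
  next
    assume "(F b, F b') \<in> ?R"
    then have "graph_iso (F b) (F b')" unfolding iso_rel_def by simp
    then obtain g where g: "bij_betw g (h ` V1) (h ` V1)"
      "\<forall>u\<in>h ` V1. \<forall>v\<in>h ` V1. {u, v} \<in> GE b \<longleftrightarrow> {g u, g v} \<in> GE b'"
      unfolding graph_iso_def F_def by auto
    obtain \<alpha> where a: "\<alpha> \<in> graph_aut V E"
      "\<forall>x. pol (h ` V1) (Ph b') V (\<alpha> x) = \<alpha> (pol (h ` V1) (Ph b) V x)"
      using L2[OF L4s(2)[OF b(1)] L4s(2)[OF b(2)] g] by blast
    show "(b, b') \<in> ?S"
      by (rule conj_char[OF b a(1)]) (use a(2) L4s(3)[OF b(1)] L4s(3)[OF b(2)] in simp)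
  qed
  have sur: "\<exists>b\<in>?B. (F b, G) \<in> ?R" if G: "G \<in> ?A" for G
  proof -
    have sG: "simple_graph (fst G) (snd G)" and "graph_iso (kronecker_cover (fst G) (snd G)) (V, E)"
      using G unfolding kc_preimages_def by auto
    then obtain \<phi> where ki: "kiso (fst G) (snd G) \<phi> V E" using graph_iso_kc by blast
    let ?\<pi> = "pol (fst G) \<phi> V"
    have pB: "?\<pi> \<in> ?B" by (rule pol_in_polarities[OF sG ki sK cK bp])
    have idaut: "id \<in> graph_aut V E" unfolding graph_aut_def by simp
    have "graph_iso (h ` V1, GE ?\<pi>) (fst G, snd G)"
      by (rule L3[OF L4s(2)[OF pB] ki idaut]) (simp add: L4s(3)[OF pB])
    then have "(F ?\<pi>, G) \<in> ?R" unfolding iso_rel_def using FA[OF pB] G by (simp add: F_def)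
    then show ?thesis using pB by blast
  qed
  have bij: "bij_betw (\<lambda>X. ?R `` (F ` X)) (?B // ?S) (?A // ?R)"
    by (rule quot_bij[OF eqR SB fB iff sur]) auto
  have "finite ?B" using finite_aut[OF finV, of E] unfolding polarities_def by auto
  then have finB: "finite (?B // ?S)" using SB by (rule finite_quotient)
  show ?thesis using bij finB bij_betw_finite bij_betw_same_card by metis
qed

end
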